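(* Let $R$ be a Krull domain whose divisor class group $Cl(R)$ is not torsion. Then there exist a height-one prime ideal $P$ of $R$ whose class in $Cl(R)$ has infinite order, and an irreducible element $x\in P$, such that $x^2$ factors uniquely.
   Context: A nonzero nonunit $w$ of a domain $R$ factors uniquely if whenever $w=\alpha_1\cdots\alpha_n=\beta_1\cdots\beta_m$ with all $\alpha_i,\beta_j$ irreducible, then $m=n$ and after reordering, $\alpha_i=u_i\beta_i$ for units $u_i$. *)

theory Defs
  imports "HOL-Computational_Algebra.Factorial_Ring" "HOL-Computational_Algebra.Fraction_Field"
begin

text \<open>The domain R is a type of class idom; its fraction field is 'a fract,
  with R embedded as Fract a 1.\<close>

definition r_ideal :: "'a::idom set \<Rightarrow> bool" where
  "r_ideal I \<longleftrightarrow> 0 \<in> I \<and> (\<forall>a\<in>I. \<forall>b\<in>I. a + b \<in> I) \<and> (\<forall>a\<in>I. \<forall>r. r * a \<in> I)"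

definition r_prime_ideal :: "'a::idom set \<Rightarrow> bool" where
  "r_prime_ideal P \<longleftrightarrow> r_ideal P \<and> P \<noteq> UNIV \<and> (\<forall>a b. a * b \<in> P \<longrightarrow> a \<in> P \<or> b \<in> P)"

definition height_one_prime :: "'a::idom set \<Rightarrow> bool" where
  "height_one_prime P \<longleftrightarrow> r_prime_ideal P \<and> P \<noteq> {0} \<and>
     (\<forall>Q. r_prime_ideal Q \<and> Q \<subseteq> P \<longrightarrow> Q = {0} \<or> Q = P)"

text \<open>Normalized discrete (rank one, value group Z) valuation on the fraction field;
  the value at 0 is irrelevant.\<close>
definition discrete_valuation :: "('a::idom fract \<Rightarrow> int) \<Rightarrow> bool" where
  "discrete_valuation v \<longleftrightarrow>
     (\<forall>x y. x \<noteq> 0 \<longrightarrow> y \<noteq> 0 \<longrightarrow> v (x * y) = v x + v y) \<and>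
     (\<forall>x y. x \<noteq> 0 \<longrightarrow> y \<noteq> 0 \<longrightarrow> x + y \<noteq> 0 \<longrightarrow> min (v x) (v y) \<le> v (x + y)) \<and>
     (\<forall>n. \<exists>x. x \<noteq> 0 \<and> v x = n)"

definition valuation_ring :: "('a::idom fract \<Rightarrow> int) \<Rightarrow> 'a fract set" where
  "valuation_ring v = {x. x = 0 \<or> 0 \<le> v x}"

definition krull_domain :: "'a::idom itself \<Rightarrow> bool" where
  "krull_domain TYPE('a) \<longleftrightarrow> (\<exists>V :: ('a fract \<Rightarrow> int) set.
     (\<forall>v\<in>V. discrete_valuation v) \<and>
     (\<forall>x :: 'a fract. (\<exists>a. x = Fract a 1) \<longleftrightarrow> (\<forall>v\<in>V. x \<in> valuation_ring v)) \<and>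
     (\<forall>a :: 'a. a \<noteq> 0 \<longrightarrow> finite {v\<in>V. v (Fract a 1) \<noteq> 0}))"

definition localization :: "'a::idom set \<Rightarrow> 'a fract set" where
  "localization P = {Fract a b | a b. b \<notin> P}"

text \<open>The normalized valuation v_P of the DVR R_P (P height one in a Krull domain).\<close>
definition val_at :: "'a::idom set \<Rightarrow> 'a fract \<Rightarrow> int" where
  "val_at P = (SOME v. discrete_valuation v \<and> valuation_ring v = localization P)"

definition is_divisor :: "('a::idom set \<Rightarrow> int) \<Rightarrow> bool" where
  "is_divisor D \<longleftrightarrow> finite {P. D P \<noteq> 0} \<and> (\<forall>P. D P \<noteq> 0 \<longrightarrow> height_one_prime P)"

definition principal_divisor :: "('a::idom set \<Rightarrow> int) \<Rightarrow> bool" where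
  "principal_divisor D \<longleftrightarrow> (\<exists>f :: 'a fract. f \<noteq> 0 \<and>
     (\<forall>P. height_one_prime P \<longrightarrow> D P = val_at P f))"

definition class_group_torsion :: "'a::idom itself \<Rightarrow> bool" where
  "class_group_torsion TYPE('a) \<longleftrightarrow> (\<forall>D :: 'a set \<Rightarrow> int. is_divisor D \<longrightarrow>
     (\<exists>n::int. n \<ge> 1 \<and> principal_divisor (\<lambda>P. n * D P)))"

definition prime_class_infinite_order :: "'a::idom set \<Rightarrow> bool" where
  "prime_class_infinite_order P \<longleftrightarrow>
     (\<forall>n::int. n \<ge> 1 \<longrightarrow> \<not> principal_divisor (\<lambda>Q. if Q = P then n else 0))"

definition factors_uniquely :: "'a::idom \<Rightarrow> bool" where
  "factors_uniquely w \<longleftrightarrow> w \<noteq> 0 \<and> \<not> w dvd 1 \<and>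
     (\<forall>xs ys. (\<forall>a\<in>set xs. irreducible a) \<longrightarrow> (\<forall>b\<in>set ys. irreducible b) \<longrightarrow>
        prod_list xs = w \<longrightarrow> prod_list ys = w \<longrightarrow>
        (\<exists>zs. mset zs = mset ys \<and>
           list_all2 (\<lambda>a b. \<exists>u. u dvd 1 \<and> a = u * b) xs zs))"

end

theory Submission
  imports Defs
begin

lemma Fract1_eq_iff [simp]: "Fract (a::'a::idom) 1 = Fract b 1 \<longleftrightarrow> a = b"
  by (simp add: eq_fract)

lemma Fract1_zero_iff [simp]: "Fract (a::'a::idom) 1 = 0 \<longleftrightarrow> a = 0"
  by (metis Fract1_eq_iff fract_collapse(1))

lemma Fract1_one [simp]: "Fract (1::'a::idom) 1 = 1"
  by (simp add: fract_collapse)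

lemma Fract1_mult: "Fract (a::'a::idom) 1 * Fract b 1 = Fract (a*b) 1"
  by simp

lemma Fract1_pow: "Fract (a::'a::idom) 1 ^ n = Fract (a^n) 1"
  by (induction n) simp_all

lemma Fract_split: "b \<noteq> 0 \<Longrightarrow> Fract (a::'a::idom) b = Fract a 1 * inverse (Fract b 1)"
  by simp

section \<open>Valuations\<close>

context
  fixes v :: "'a::idom fract \<Rightarrow> int"
  assumes dv: "discrete_valuation v"
begin

lemma dv_mult: "x \<noteq> 0 \<Longrightarrow> y \<noteq> 0 \<Longrightarrow> v (x * y) = v x + v y"
  using dv unfolding discrete_valuation_def by blast

lemma dv_add: "x \<noteq> 0 \<Longrightarrow> y \<noteq> 0 \<Longrightarrow> x + y \<noteq> 0 \<Longrightarrow> min (v x) (v y) \<le> v (x + y)"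
  using dv unfolding discrete_valuation_def by blast

lemma dv_surj: "\<exists>x. x \<noteq> 0 \<and> v x = n"
  using dv unfolding discrete_valuation_def by blast

lemma dv_one [simp]: "v 1 = 0"
  using dv_mult[of 1 1] by simp

lemma dv_inv: "x \<noteq> 0 \<Longrightarrow> v (inverse x) = - v x"
  using dv_mult[of x "inverse x"] by simp

lemma dv_pow: "x \<noteq> 0 \<Longrightarrow> v (x ^ n) = int n * v x"
  by (induction n) (simp_all add: dv_mult algebra_simps)

lemma dv_powi: "x \<noteq> 0 \<Longrightarrow> v (x powi k) = k * v x"
  by (cases "k \<ge> 0") (simp_all add: power_int_def dv_pow dv_inv power_inverse[symmetric])

lemma dv_div: "x \<noteq> 0 \<Longrightarrow> y \<noteq> 0 \<Longrightarrow> v (x / y) = v x - v y"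
  by (simp add: divide_inverse dv_mult dv_inv)

lemma dv_Fract: "a \<noteq> 0 \<Longrightarrow> b \<noteq> 0 \<Longrightarrow> v (Fract a b) = v (Fract a 1) - v (Fract b 1)"
proof -
  assume a: "a \<noteq> 0" and b: "b \<noteq> 0"
  have e: "Fract a b = Fract a 1 * inverse (Fract b 1)" using b by simp
  have "v (Fract a 1 * inverse (Fract b 1)) = v (Fract a 1) + v (inverse (Fract b 1))"
    by (rule dv_mult) (use a b in \<open>auto simp del: inverse_fract\<close>)
  also have "v (inverse (Fract b 1)) = - v (Fract b 1)" by (rule dv_inv) (use b in \<open>auto simp del: inverse_fract\<close>)
  finally show ?thesis unfolding e[symmetric] by linarith
qed

lemma vring_iff: "x \<noteq> 0 \<Longrightarrow> x \<in> valuation_ring v \<longleftrightarrow> 0 \<le> v x"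
  by (simp add: valuation_ring_def)

end


definition center :: "('a::idom fract \<Rightarrow> int) \<Rightarrow> 'a set" where
  "center v = {a. a = 0 \<or> 0 < v (Fract a 1)}"

lemma prime_notin_one: "r_prime_ideal P \<Longrightarrow> (1::'a::idom) \<notin> P"
proof
  assume P: "r_prime_ideal P" and one: "1 \<in> P"
  have "\<forall>r. r * 1 \<in> P" using P one unfolding r_prime_ideal_def r_ideal_def by blast
  then have "P = UNIV" by auto
  then show False using P unfolding r_prime_ideal_def by blast
qed

lemma prime_zero: "r_prime_ideal P \<Longrightarrow> 0 \<in> P"
  unfolding r_prime_ideal_def r_ideal_def by blast

lemma prime_mult: "r_prime_ideal P \<Longrightarrow> a \<in> P \<Longrightarrow> r * a \<in> P"
  unfolding r_prime_ideal_def r_ideal_def by blast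

lemma prime_mult_iff: "r_prime_ideal P \<Longrightarrow> a * b \<in> P \<longleftrightarrow> a \<in> P \<or> (b::'a::idom) \<in> P"
proof
  assume P: "r_prime_ideal P"
  then show "a * b \<in> P \<Longrightarrow> a \<in> P \<or> b \<in> P" unfolding r_prime_ideal_def by blast
  show "a \<in> P \<or> b \<in> P \<Longrightarrow> a * b \<in> P"
  proof -
    assume "a \<in> P \<or> b \<in> P"
    then show "a * b \<in> P"
    proof
      assume "a \<in> P" then have "b * a \<in> P" by (rule prime_mult[OF P])
      then show ?thesis by (simp add: mult.commute)
    next
      assume "b \<in> P" then show ?thesis by (rule prime_mult[OF P])
    qed
  qed
qed

lemma prime_pow: "r_prime_ideal P \<Longrightarrow> a ^ n \<in> P \<Longrightarrow> (a::'a::idom) \<in> P"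
proof (induction n)
  case 0 then show ?case using prime_notin_one by auto
next
  case (Suc n) then show ?case using prime_mult_iff[of P a "a^n"] by auto
qed

lemma unit_notin_prime: "r_prime_ideal P \<Longrightarrow> a dvd 1 \<Longrightarrow> (a::'a::idom) \<notin> P"
proof
  assume P: "r_prime_ideal P" and u: "a dvd 1" and a: "a \<in> P"
  obtain b where "1 = a * b" using u by (auto elim: dvdE)
  then have "1 \<in> P" using prime_mult[OF P a, of b] by (simp add: mult.commute)
  then show False using prime_notin_one[OF P] by simp
qed

locale krull_fam =
  fixes V :: "('a::idom fract \<Rightarrow> int) set"
  assumes dvV: "v \<in> V \<Longrightarrow> discrete_valuation v"
    and defR: "(\<exists>a. x = Fract a 1) \<longleftrightarrow> (\<forall>v\<in>V. x \<in> valuation_ring v)"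
    and finV: "a \<noteq> 0 \<Longrightarrow> finite {v\<in>V. v (Fract a 1) \<noteq> 0}"
begin

lemma vR_nonneg: "v \<in> V \<Longrightarrow> a \<noteq> 0 \<Longrightarrow> 0 \<le> v (Fract a 1)"
proof -
  assume v: "v \<in> V" and a: "a \<noteq> 0"
  have "\<forall>v\<in>V. Fract a 1 \<in> valuation_ring v" using defR[of "Fract a 1"] by blast
  then have "Fract a 1 \<in> valuation_ring v" using v by blast
  then show ?thesis using a by (simp add: valuation_ring_def)
qed

lemma center_nonneg_pos: "v \<in> V \<Longrightarrow> a \<noteq> 0 \<Longrightarrow> a \<notin> center v \<Longrightarrow> v (Fract a 1) = 0"
proof -
  assume "v \<in> V" "a \<noteq> 0" "a \<notin> center v"
  then show ?thesis using vR_nonneg[of v a] unfolding center_def by simp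
qed

lemma center_prime: "v \<in> V \<Longrightarrow> r_prime_ideal (center v)"
proof -
  assume vV: "v \<in> V"
  note dv = dvV[OF vV]
  have ideal: "r_ideal (center v)"
    unfolding r_ideal_def
  proof (intro conjI ballI allI)
    show "0 \<in> center v" by (simp add: center_def)
  next
    fix a b assume a: "a \<in> center v" and b: "b \<in> center v"
    show "a + b \<in> center v"
    proof (cases "a = 0 \<or> b = 0 \<or> a + b = 0")
      case True then show ?thesis using a b by (auto simp: center_def)
    next
      case False
      then have "min (v (Fract a 1)) (v (Fract b 1)) \<le> v (Fract a 1 + Fract b 1)"
        by (intro dv_add[OF dv]) auto
      then show ?thesis using a b False by (auto simp: center_def)
    qed
  next
    fix a r assume a: "a \<in> center v"
    show "r * a \<in> center v"
    proof (cases "r = 0 \<or> a = 0")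
      case True then show ?thesis by (auto simp: center_def)
    next
      case False
      then have "v (Fract (r*a) 1) = v (Fract r 1) + v (Fract a 1)"
        using dv_mult[OF dv, of "Fract r 1" "Fract a 1"] by simp
      then show ?thesis using a False vR_nonneg[OF vV, of r] by (auto simp: center_def)
    qed
  qed
  have notU: "center v \<noteq> UNIV"
  proof
    assume "center v = UNIV"
    then have "(1::'a) \<in> center v" by simp
    then show False using dv_one[OF dv] by (simp add: center_def)
  qed
  have pr: "\<forall>a b. a * b \<in> center v \<longrightarrow> a \<in> center v \<or> b \<in> center v"
  proof (intro allI impI)
    fix a b assume ab: "a * b \<in> center v"
    show "a \<in> center v \<or> b \<in> center v"
    proof (cases "a = 0 \<or> b = 0")
      case True then show ?thesis by (auto simp: center_def)
    next
      case False
      then have "v (Fract (a*b) 1) = v (Fract a 1) + v (Fract b 1)"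
        using dv_mult[OF dv, of "Fract a 1" "Fract b 1"] by simp
      then show ?thesis using ab False vR_nonneg[OF vV, of a] vR_nonneg[OF vV, of b]
        by (auto simp: center_def)
    qed
  qed
  show ?thesis unfolding r_prime_ideal_def by (intro conjI ideal notU pr)
qed

lemma center_nonzero: "v \<in> V \<Longrightarrow> \<exists>c. c \<noteq> 0 \<and> c \<in> center v"
proof -
  assume vV: "v \<in> V"
  note dv = dvV[OF vV]
  obtain x where x: "x \<noteq> 0" "v x = 1" using dv_surj[OF dv] by blast
  obtain c d where cd: "x = Fract c d" "d \<noteq> 0" by (cases x)
  then have c: "c \<noteq> 0" using x fract_collapse(1)[of d] by auto
  have "v x = v (Fract c 1) - v (Fract d 1)"
    using cd(1) dv_Fract[OF dv c cd(2)] by simp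
  then have "0 < v (Fract c 1)" using x vR_nonneg[OF vV cd(2)] by simp
  then show ?thesis using c by (auto simp: center_def)
qed

lemma center_ne_zero: "v \<in> V \<Longrightarrow> center v \<noteq> {0}"
  using center_nonzero by blast

definition bad :: "'a fract \<Rightarrow> ('a fract \<Rightarrow> int) set" where
  "bad f = {u\<in>V. f \<notin> valuation_ring u}"

lemma bad_finite: "finite (bad f)"
proof -
  obtain c d where cd: "f = Fract c d" "d \<noteq> 0" by (cases f)
  show ?thesis
  proof (cases "c = 0")
    case True
    then have "bad f = {}" using cd by (auto simp: bad_def valuation_ring_def fract_collapse)
    then show ?thesis by simp
  next
    case False
    have "bad f \<subseteq> {v\<in>V. v (Fract d 1) \<noteq> 0}"
    proof
      fix u assume u: "u \<in> bad f"
      then have uV: "u \<in> V" and nin: "f \<notin> valuation_ring u" by (auto simp: bad_def)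
      have "u f = u (Fract c 1) - u (Fract d 1)"
        using cd(1) dv_Fract[OF dvV[OF uV] False cd(2)] by simp
      then have "u (Fract d 1) \<noteq> 0" using nin vR_nonneg[OF uV False] by (auto simp: valuation_ring_def)
      then show "u \<in> {v\<in>V. v (Fract d 1) \<noteq> 0}" using uV by simp
    qed
    then show ?thesis using finite_subset finV[OF cd(2)] by blast
  qed
qed


lemma ht1_center: "height_one_prime P \<Longrightarrow> u \<in> V \<Longrightarrow> center u \<subseteq> P \<Longrightarrow> center u = P"
  using center_prime[of u] center_ne_zero[of u] unfolding height_one_prime_def by blast

lemma clear_aux:
  assumes P: "r_prime_ideal P"
  shows "\<forall>f. card (bad f) = n \<longrightarrow> (\<forall>u\<in>V. center u \<subseteq> P \<longrightarrow> f \<in> valuation_ring u) \<longrightarrow> f \<in> localization P"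
proof (induction n rule: less_induct)
  case (less n)
  show ?case
  proof (intro allI impI)
    fix f assume cn: "card (bad f) = n" and Hf: "\<forall>u\<in>V. center u \<subseteq> P \<longrightarrow> f \<in> valuation_ring u"
    show "f \<in> localization P"
    proof (cases "bad f = {}")
      case True
      then have "\<forall>v\<in>V. f \<in> valuation_ring v" by (auto simp: bad_def)
      then obtain a where "f = Fract a 1" using defR by blast
      then show ?thesis using prime_notin_one[OF P] by (auto simp: localization_def)
    next
      case False
      then obtain w where w: "w \<in> bad f" by blast
      then have wV: "w \<in> V" and fw: "f \<notin> valuation_ring w" by (auto simp: bad_def)
      then have "\<not> center w \<subseteq> P" using Hf by blast
      then obtain b where b: "b \<in> center w" "b \<notin> P" by blast
      have b0: "b \<noteq> 0" using b prime_zero[OF P] by auto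
      have f0: "f \<noteq> 0" using fw by (auto simp: valuation_ring_def)
      have wf: "w f < 0" using fw f0 by (simp add: valuation_ring_def)
      have wb: "0 < w (Fract b 1)" using b b0 by (simp add: center_def)
      define N where "N = nat (- w f)"
      define f' where "f' = f * Fract (b^N) 1"
      have bN0: "b^N \<noteq> 0" using b0 by simp
      have f'0: "f' \<noteq> 0" using f0 bN0 by (simp add: f'_def)
      have vf': "u f' = u f + int N * u (Fract b 1)" if "u \<in> V" for u
      proof -
        have "u f' = u f + u (Fract (b^N) 1)"
          unfolding f'_def by (rule dv_mult[OF dvV[OF that] f0]) (use bN0 in simp)
        moreover have "u (Fract b 1 ^ N) = int N * u (Fract b 1)"
          by (rule dv_pow[OF dvV[OF that]]) (use b0 in simp)
        ultimately show ?thesis by (simp add: Fract1_pow)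
      qed
      have wf': "0 \<le> w f'"
      proof -
        have "int N = - w f" using wf by (simp add: N_def)
        moreover have "int N * 1 \<le> int N * w (Fract b 1)" using wb by (intro mult_left_mono) auto
        ultimately show ?thesis using vf'[OF wV] by simp
      qed
      have sub: "bad f' \<subseteq> bad f - {w}"
      proof
        fix u assume u: "u \<in> bad f'"
        then have uV: "u \<in> V" and nu: "f' \<notin> valuation_ring u" by (auto simp: bad_def)
        have uf'': "u f' < 0" using nu f'0 by (simp add: valuation_ring_def)
        have "0 \<le> int N * u (Fract b 1)" using vR_nonneg[OF uV b0] by simp
        then have "u f < 0" using vf'[OF uV] uf'' by simp
        then have "u \<in> bad f" using uV by (simp add: bad_def valuation_ring_def f0)
        moreover have "u \<noteq> w" using uf'' wf' by auto
        ultimately show "u \<in> bad f - {w}" by simp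
      qed
      have "card (bad f') < n"
      proof -
        have "bad f' \<subset> bad f" using sub w by blast
        then show ?thesis using cn bad_finite psubset_card_mono by blast
      qed
      moreover have "\<forall>u\<in>V. center u \<subseteq> P \<longrightarrow> f' \<in> valuation_ring u"
      proof (intro ballI impI)
        fix u assume uV: "u \<in> V" and cu: "center u \<subseteq> P"
        then have "0 \<le> u f" using Hf f0 by (simp add: valuation_ring_def)
        moreover have "0 \<le> int N * u (Fract b 1)" using vR_nonneg[OF uV b0] by simp
        ultimately show "f' \<in> valuation_ring u" using vf'[OF uV] by (simp add: valuation_ring_def)
      qed
      ultimately have "f' \<in> localization P" using less.IH by blast
      then obtain e s where es: "f' = Fract e s" "s \<notin> P" by (auto simp: localization_def)
      have s0: "s \<noteq> 0" using es prime_zero[OF P] by auto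
      have nz: "Fract (b^N) 1 \<noteq> 0" using bN0 by simp
      have "f = f' * inverse (Fract (b^N) 1)" unfolding f'_def using nz by (simp add: mult.assoc del: inverse_fract)
      also have "\<dots> = Fract e (s * b^N)" using es(1) by simp
      finally have "f = Fract e (s * b^N)" .
      moreover have "s * b^N \<notin> P" using es(2) b(2) prime_mult_iff[OF P] prime_pow[OF P] by blast
      ultimately show ?thesis by (auto simp: localization_def)
    qed
  qed
qed

lemma clear:
  assumes P: "r_prime_ideal P" and H: "\<forall>u\<in>V. center u \<subseteq> P \<longrightarrow> f \<in> valuation_ring u"
  shows "f \<in> localization P"
  using clear_aux[OF P] H by blast

lemma exists_center:
  assumes P: "r_prime_ideal P" "P \<noteq> {0}"
  shows "\<exists>u\<in>V. center u \<subseteq> P"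
proof (rule ccontr)
  assume nc: "\<not> (\<exists>u\<in>V. center u \<subseteq> P)"
  obtain a where a: "a \<in> P" "a \<noteq> 0" using P prime_zero[OF P(1)] by blast
  have "inverse (Fract a 1) \<in> localization P" by (rule clear[OF P(1)]) (use nc in blast)
  then obtain e s where es: "inverse (Fract a 1) = Fract e s" "s \<notin> P" by (auto simp: localization_def)
  have s0: "s \<noteq> 0" using es prime_zero[OF P(1)] by auto
  from es(1) have "Fract 1 a = Fract e s" by simp
  then have "1 * s = e * a" using eq_fract(1)[OF a(2) s0] by simp
  then have "s \<in> P" using prime_mult[OF P(1) a(1), of e] by simp
  then show False using es(2) by simp
qed

end

lemma argmax_ratio:
  fixes p q :: "'b \<Rightarrow> int"
  assumes "finite S" "S \<noteq> {}" "\<forall>x\<in>S. 0 < q x"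
  shows "\<exists>m\<in>S. \<forall>x\<in>S. p x * q m \<le> p m * q x"
  using assms
proof (induction S rule: finite_ne_induct)
  case (singleton x) then show ?case by simp
next
  case (insert x S)
  then obtain m where m: "m \<in> S" "\<forall>y\<in>S. p y * q m \<le> p m * q y" by auto
  have qx: "0 < q x" and qm: "0 < q m" using insert m by auto
  show ?case
  proof (cases "p x * q m \<le> p m * q x")
    case True then show ?thesis using m by auto
  next
    case False
    have "\<forall>y\<in>insert x S. p y * q x \<le> p x * q y"
    proof
      fix y assume y: "y \<in> insert x S"
      show "p y * q x \<le> p x * q y"
      proof (cases "y = x")
        case True then show ?thesis by simp
      next
        case False
        then have yS: "y \<in> S" using y by simp
        then have qy: "0 < q y" using insert by auto
        have 1: "p y * q m * q x \<le> p m * q y * q x" using m(2) yS qx by (intro mult_right_mono) auto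
        have 2: "p m * q x * q y \<le> p x * q m * q y" using \<open>\<not> p x * q m \<le> p m * q x\<close> qy by (intro mult_right_mono) auto
        have "(p y * q x) * q m \<le> (p x * q y) * q m" using 1 2 by (simp add: algebra_simps)
        then show ?thesis using qm by simp
      qed
    qed
    then show ?thesis by blast
  qed
qed


context krull_fam
begin

lemma ess_ring:
  assumes P: "height_one_prime P" and vV: "v \<in> V" and cv: "center v = P"
  shows "valuation_ring v = localization P"
proof
  have Pp: "r_prime_ideal P" and Pne: "P \<noteq> {0}" using P by (auto simp: height_one_prime_def)
  note dv = dvV[OF vV]
  show "localization P \<subseteq> valuation_ring v"
  proof
    fix x assume "x \<in> localization P"
    then obtain a b where x: "x = Fract a b" "b \<notin> P" by (auto simp: localization_def)
    have b0: "b \<noteq> 0" using x prime_zero[OF Pp] by auto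
    show "x \<in> valuation_ring v"
    proof (cases "a = 0")
      case True then show ?thesis using x by (simp add: valuation_ring_def fract_collapse)
    next
      case False
      have "v x = v (Fract a 1) - v (Fract b 1)" using x(1) dv_Fract[OF dv False b0] by simp
      moreover have "v (Fract b 1) = 0" using center_nonneg_pos[OF vV b0] x(2) cv by simp
      ultimately show ?thesis using vR_nonneg[OF vV False] by (simp add: valuation_ring_def)
    qed
  qed
  show "valuation_ring v \<subseteq> localization P"
  proof
    fix f assume fv: "f \<in> valuation_ring v"
    show "f \<in> localization P"
    proof (cases "f = 0")
      case True
      then have "f = Fract 0 1" by (simp add: fract_collapse)
      then show ?thesis using prime_notin_one[OF Pp] by (auto simp: localization_def)
    next
      case f0: False
      have vf: "0 \<le> v f" using fv f0 by (simp add: valuation_ring_def)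
      obtain c where c: "c \<in> P" "c \<noteq> 0" using Pne prime_zero[OF Pp] by blast
      show ?thesis
      proof (rule clear[OF Pp], rule ccontr)
        assume nH: "\<not> (\<forall>u\<in>V. center u \<subseteq> P \<longrightarrow> f \<in> valuation_ring u)"
        define S where "S = {u\<in>V. center u \<subseteq> P \<and> f \<notin> valuation_ring u}"
        have Sne: "S \<noteq> {}" using nH by (auto simp: S_def)
        have cS: "center u = P" if "u \<in> S" for u using that ht1_center[OF P] by (auto simp: S_def)
        have ucpos: "0 < u (Fract c 1)" if "u \<in> S" for u
          using cS[OF that] c by (auto simp: center_def)
        have ufneg: "u f < 0" if "u \<in> S" for u
          using that f0 by (auto simp: S_def valuation_ring_def)
        have "S \<subseteq> {u\<in>V. u (Fract c 1) \<noteq> 0}"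
        proof
          fix u assume uS: "u \<in> S"
          then show "u \<in> {u\<in>V. u (Fract c 1) \<noteq> 0}" using ucpos[OF uS] by (auto simp: S_def)
        qed
        then have Sfin: "finite S" using finV[OF c(2)] finite_subset by blast
        obtain m where m: "m \<in> S" "\<forall>u\<in>S. (- u f) * m (Fract c 1) \<le> (- m f) * u (Fract c 1)"
          using argmax_ratio[OF Sfin Sne, of "\<lambda>u. u (Fract c 1)" "\<lambda>u. - u f"] ucpos by auto
        have mV: "m \<in> V" using m by (auto simp: S_def)
        define \<beta> where "\<beta> = nat (- m f)"
        define \<gamma> where "\<gamma> = nat (m (Fract c 1))"
        have \<beta>: "int \<beta> = - m f" using ufneg[OF m(1)] by (simp add: \<beta>_def)
        have \<gamma>: "int \<gamma> = m (Fract c 1)" using ucpos[OF m(1)] by (simp add: \<gamma>_def)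
        define z where "z = Fract (c ^ \<beta>) 1 * f ^ \<gamma>"
        have z0: "z \<noteq> 0" using c f0 by (simp add: z_def)
        have vz: "u z = int \<beta> * u (Fract c 1) + int \<gamma> * u f" if "u \<in> V" for u
        proof -
          note du = dvV[OF that]
          have "u z = u (Fract (c ^ \<beta>) 1) + u (f ^ \<gamma>)"
            unfolding z_def by (rule dv_mult[OF du]) (use c f0 in simp_all)
          moreover have "u (Fract c 1 ^ \<beta>) = int \<beta> * u (Fract c 1)" by (rule dv_pow[OF du]) (use c in simp)
          moreover have "u (f ^ \<gamma>) = int \<gamma> * u f" by (rule dv_pow[OF du f0])
          ultimately show ?thesis by (simp add: Fract1_pow)
        qed
        have "z \<in> localization P"
        proof (rule clear[OF Pp], intro ballI impI)
          fix u assume uV: "u \<in> V" and cu: "center u \<subseteq> P"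
          show "z \<in> valuation_ring u"
          proof (cases "f \<in> valuation_ring u")
            case True
            then have "0 \<le> u f" using f0 by (simp add: valuation_ring_def)
            moreover have "0 \<le> u (Fract c 1)" using vR_nonneg[OF uV c(2)] .
            ultimately show ?thesis using vz[OF uV] z0 by (simp add: valuation_ring_def)
          next
            case False
            then have uS: "u \<in> S" using uV cu by (simp add: S_def)
            have "(- u f) * m (Fract c 1) \<le> (- m f) * u (Fract c 1)" using m(2) uS by blast
            then have "0 \<le> int \<beta> * u (Fract c 1) + int \<gamma> * u f" using \<beta> \<gamma> by (simp add: algebra_simps)
            then show ?thesis using vz[OF uV] z0 by (simp add: valuation_ring_def)
          qed
        qed
        then obtain e s where es: "z = Fract e s" "s \<notin> P" by (auto simp: localization_def)
        have s0: "s \<noteq> 0" using es prime_zero[OF Pp] by auto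
        have e0: "e \<noteq> 0" using es z0 fract_collapse(1)[of s] by auto
        have ez: "Fract e 1 = z * Fract s 1" using es(1) s0 by (simp add: eq_fract)
        have ve: "u (Fract e 1) = u z + u (Fract s 1)" if "u \<in> V" for u
          unfolding ez by (rule dv_mult[OF dvV[OF that] z0]) (use s0 in simp)
        have vs: "u (Fract s 1) = 0" if "u \<in> V" "center u = P" for u
          using center_nonneg_pos[OF that(1) s0] es(2) that(2) by simp
        have "0 < v (Fract e 1)"
        proof -
          have "0 < v (Fract c 1)" using c cv by (auto simp: center_def)
          moreover have "1 \<le> \<beta>" using \<beta> ufneg[OF m(1)] by simp
          ultimately have "0 < int \<beta> * v (Fract c 1)" by simp
          moreover have "0 \<le> int \<gamma> * v f" using vf by simp
          ultimately show ?thesis using ve[OF vV] vz[OF vV] vs[OF vV cv] by simp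
        qed
        then have "e \<in> center v" by (simp add: center_def)
        then have "e \<in> P" using cv by simp
        moreover have "m (Fract e 1) = 0"
          using ve[OF mV] vz[OF mV] vs[OF mV cS[OF m(1)]] \<beta> \<gamma> by (simp add: algebra_simps)
        ultimately have "e \<in> center m" using cS[OF m(1)] by simp
        then show False using e0 \<open>m (Fract e 1) = 0\<close> by (simp add: center_def)
      qed
    qed
  qed
qed

lemma val_at_spec:
  fixes P :: "'a set"
  assumes P: "height_one_prime P"
  shows "discrete_valuation (val_at P) \<and> valuation_ring (val_at P) = localization P"
proof -
  have Pp: "r_prime_ideal P" and Pne: "P \<noteq> {0}" using P by (auto simp: height_one_prime_def)
  obtain v where v: "v \<in> V" "center v \<subseteq> P" using exists_center[OF Pp Pne] by blast
  have "center v = P" using ht1_center[OF P v] .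
  then have "discrete_valuation v \<and> valuation_ring v = localization P"
    using ess_ring[OF P v(1)] dvV[OF v(1)] by simp
  then show ?thesis unfolding val_at_def
    by (rule someI[where P="\<lambda>v. discrete_valuation v \<and> valuation_ring v = localization P"])
qed

end


lemma center_ring:
  assumes dv: "discrete_valuation v"
  shows "center v = {a. a = 0 \<or> inverse (Fract a 1) \<notin> valuation_ring v}"
proof -
  have "0 < v (Fract a 1) \<longleftrightarrow> inverse (Fract a 1) \<notin> valuation_ring v" if a: "a \<noteq> 0" for a
  proof -
    have "v (inverse (Fract a 1)) = - v (Fract a 1)" by (rule dv_inv[OF dv]) (use a in simp)
    moreover have "inverse (Fract a 1) \<noteq> 0" using a by (simp del: inverse_fract)
    ultimately show ?thesis by (auto simp add: valuation_ring_def simp del: inverse_fract)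
  qed
  then show ?thesis unfolding center_def by blast
qed

lemma krull_remove:
  assumes K: "krull_fam V" and wV: "w \<in> V" and nh: "\<not> height_one_prime (center w)"
  shows "krull_fam {u\<in>V. valuation_ring u \<noteq> valuation_ring w}" (is "krull_fam ?V'")
proof -
  interpret K: krull_fam V by (rule K)
  show ?thesis
  proof
    fix v assume "v \<in> ?V'" then show "discrete_valuation v" using K.dvV by blast
  next
    fix a :: 'a assume a: "a \<noteq> 0"
    have "{v \<in> ?V'. v (Fract a 1) \<noteq> 0} \<subseteq> {v\<in>V. v (Fract a 1) \<noteq> 0}" by blast
    then show "finite {v \<in> ?V'. v (Fract a 1) \<noteq> 0}" using K.finV[OF a] finite_subset by blast
  next
    fix x :: "'a fract"
    show "(\<exists>a. x = Fract a 1) \<longleftrightarrow> (\<forall>v\<in>?V'. x \<in> valuation_ring v)"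
    proof
      assume "\<exists>a. x = Fract a 1" then show "\<forall>v\<in>?V'. x \<in> valuation_ring v" using K.defR by blast
    next
      assume H: "\<forall>v\<in>?V'. x \<in> valuation_ring v"
      show "\<exists>a. x = Fract a 1"
      proof (cases "x \<in> valuation_ring w")
        case True
        then have "\<forall>v\<in>V. x \<in> valuation_ring v" using H by auto
        then show ?thesis using K.defR by blast
      next
        case xw: False
        note dw = K.dvV[OF wV]
        have x0: "x \<noteq> 0" using xw by (auto simp: valuation_ring_def)
        have wx: "w x < 0" using xw x0 by (simp add: valuation_ring_def)
        have cwp: "r_prime_ideal (center w)" using K.center_prime[OF wV] .
        have cw0: "center w \<noteq> {0}" using K.center_ne_zero[OF wV] .
        obtain Q where Q: "r_prime_ideal Q" "Q \<subseteq> center w" "Q \<noteq> {0}" "Q \<noteq> center w"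
          using nh cwp cw0 unfolding height_one_prime_def by blast
        obtain u1 where u1: "u1 \<in> V" "center u1 \<subseteq> Q" using K.exists_center[OF Q(1) Q(3)] by blast
        obtain c where c: "c \<noteq> 0" "c \<in> center u1" using K.center_nonzero[OF u1(1)] by blast
        have ring_ne: "valuation_ring u1 \<noteq> valuation_ring w"
        proof
          assume eq: "valuation_ring u1 = valuation_ring w"
          have "center u1 = center w"
            using center_ring[OF K.dvV[OF u1(1)]] center_ring[OF dw] eq by simp
          then show False using u1(2) Q(2) Q(4) by blast
        qed
        then have "x \<in> valuation_ring u1" using H u1(1) by blast
        then have u1x: "0 \<le> u1 x" using x0 by (simp add: valuation_ring_def)
        have u1c: "0 < u1 (Fract c 1)" using c by (simp add: center_def)
        have "c \<in> center w" using c u1(2) Q(2) by blast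
        then have wc: "0 < w (Fract c 1)" using c by (simp add: center_def)
        define \<beta> where "\<beta> = nat (- w x)"
        define \<gamma> where "\<gamma> = nat (w (Fract c 1))"
        have \<beta>: "int \<beta> = - w x" using wx by (simp add: \<beta>_def)
        have \<gamma>: "int \<gamma> = w (Fract c 1)" using wc by (simp add: \<gamma>_def)
        define z where "z = Fract (c ^ \<beta>) 1 * x ^ \<gamma>"
        have z0: "z \<noteq> 0" using c x0 by (simp add: z_def)
        have vz: "u z = int \<beta> * u (Fract c 1) + int \<gamma> * u x" if "u \<in> V" for u
        proof -
          note du = K.dvV[OF that]
          have "u z = u (Fract (c ^ \<beta>) 1) + u (x ^ \<gamma>)"
            unfolding z_def by (rule dv_mult[OF du]) (use c x0 in simp_all)
          moreover have "u (Fract c 1 ^ \<beta>) = int \<beta> * u (Fract c 1)" by (rule dv_pow[OF du]) (use c in simp)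
          moreover have "u (x ^ \<gamma>) = int \<gamma> * u x" by (rule dv_pow[OF du x0])
          ultimately show ?thesis by (simp add: Fract1_pow)
        qed
        have wz: "w z = 0" using vz[OF wV] \<beta> \<gamma> by (simp add: algebra_simps)
        have "\<forall>u\<in>V. z \<in> valuation_ring u"
        proof
          fix u assume uV: "u \<in> V"
          show "z \<in> valuation_ring u"
          proof (cases "valuation_ring u = valuation_ring w")
            case True
            have "z \<in> valuation_ring w" using wz by (simp add: valuation_ring_def)
            then show ?thesis using True by simp
          next
            case False
            then have "x \<in> valuation_ring u" using H uV by blast
            then have "0 \<le> u x" using x0 by (simp add: valuation_ring_def)
            moreover have "0 \<le> u (Fract c 1)" using K.vR_nonneg[OF uV c(1)] .
            ultimately show ?thesis using vz[OF uV] by (simp add: valuation_ring_def)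
          qed
        qed
        then obtain e where e: "z = Fract e 1" using K.defR by blast
        have e0: "e \<noteq> 0" using e z0 by auto
        have "e \<notin> center w" using wz e e0 by (simp add: center_def)
        then have "e \<notin> center u1" using u1(2) Q(2) by blast
        moreover have "0 < u1 (Fract e 1)"
        proof -
          have "1 \<le> \<beta>" using \<beta> wx by simp
          then have "0 < int \<beta> * u1 (Fract c 1)" using u1c by simp
          moreover have "0 \<le> int \<gamma> * u1 x" using u1x by simp
          ultimately show ?thesis using vz[OF u1(1)] e by simp
        qed
        ultimately show ?thesis by (simp add: center_def)
      qed
    qed
  qed
qed

lemma krull_red_aux:
  "\<forall>V (f::'a::idom fract). krull_fam V \<longrightarrow> card (krull_fam.bad V f) = n \<longrightarrow>
     (\<forall>u\<in>V. height_one_prime (center u) \<longrightarrow> f \<in> valuation_ring u) \<longrightarrow> (\<exists>a. f = Fract a 1)"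
proof (induction n rule: less_induct)
  case (less n)
  show ?case
  proof (intro allI impI)
    fix V and f :: "'a fract"
    assume K: "krull_fam V" and cn: "card (krull_fam.bad V f) = n"
      and H: "\<forall>u\<in>V. height_one_prime (center u) \<longrightarrow> f \<in> valuation_ring u"
    interpret K: krull_fam V by (rule K)
    show "\<exists>a. f = Fract a 1"
    proof (cases "K.bad f = {}")
      case True
      then have "\<forall>v\<in>V. f \<in> valuation_ring v" by (auto simp: K.bad_def)
      then show ?thesis using K.defR by blast
    next
      case False
      then obtain w where w: "w \<in> K.bad f" by blast
      then have wV: "w \<in> V" and fw: "f \<notin> valuation_ring w" by (auto simp: K.bad_def)
      then have nh: "\<not> height_one_prime (center w)" using H by blast
      define V' where "V' = {u\<in>V. valuation_ring u \<noteq> valuation_ring w}"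
      have K': "krull_fam V'" unfolding V'_def by (rule krull_remove[OF K wV nh])
      interpret K': krull_fam V' by (rule K')
      have "K'.bad f \<subseteq> K.bad f - {w}"
      proof
        fix u assume "u \<in> K'.bad f"
        then have "u \<in> V'" "f \<notin> valuation_ring u" by (auto simp: K'.bad_def)
        then show "u \<in> K.bad f - {w}" unfolding V'_def K.bad_def by auto
      qed
      then have "K'.bad f \<subset> K.bad f" using w by blast
      then have "card (K'.bad f) < n" using cn K.bad_finite psubset_card_mono by blast
      moreover have "\<forall>u\<in>V'. height_one_prime (center u) \<longrightarrow> f \<in> valuation_ring u" using H by (auto simp: V'_def)
      ultimately show ?thesis using less.IH K' by blast
    qed
  qed
qed

context krull_fam
begin

lemma in_R:
  fixes f :: "'a fract"
  assumes f0: "f \<noteq> 0" and H: "\<forall>P. height_one_prime P \<longrightarrow> 0 \<le> val_at P f"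
  shows "\<exists>a. f = Fract a 1"
proof -
  have "\<forall>u\<in>V. height_one_prime (center u) \<longrightarrow> f \<in> valuation_ring u"
  proof (intro ballI impI)
    fix u assume uV: "u \<in> V" and h: "height_one_prime (center u)"
    have "valuation_ring u = localization (center u)" using ess_ring[OF h uV] by simp
    also have "\<dots> = valuation_ring (val_at (center u))" using val_at_spec[OF h] by simp
    finally show "f \<in> valuation_ring u" using H h by (simp add: valuation_ring_def)
  qed
  then show ?thesis using krull_red_aux krull_fam_axioms by blast
qed

end


lemma principal_cong:
  assumes "\<forall>P. height_one_prime P \<longrightarrow> D1 P = D2 P"
  shows "principal_divisor D1 \<longleftrightarrow> principal_divisor D2"
  using assms unfolding principal_divisor_def by auto

context krull_fam
begin

lemma vat_dv: "height_one_prime (P::'a set) \<Longrightarrow> discrete_valuation (val_at P)"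
  using val_at_spec by blast

lemma vat_ring: "height_one_prime (P::'a set) \<Longrightarrow> valuation_ring (val_at P) = localization P"
  using val_at_spec by blast

lemma princ_zero: "principal_divisor (\<lambda>P::'a set. 0)"
  unfolding principal_divisor_def
  by (rule exI[of _ 1]) (auto simp: dv_one[OF vat_dv])

lemma princ_lin:
  fixes D1 D2 :: "'a set \<Rightarrow> int"
  assumes "principal_divisor D1" "principal_divisor D2"
  shows "principal_divisor (\<lambda>P. a * D1 P + b * D2 P)"
proof -
  obtain f1 where f1: "f1 \<noteq> 0" "\<forall>P. height_one_prime P \<longrightarrow> D1 P = val_at P f1"
    using assms(1) unfolding principal_divisor_def by blast
  obtain f2 where f2: "f2 \<noteq> 0" "\<forall>P. height_one_prime P \<longrightarrow> D2 P = val_at P f2"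
    using assms(2) unfolding principal_divisor_def by blast
  have nz: "f1 powi a * f2 powi b \<noteq> 0" using f1 f2 by simp
  have "\<forall>P. height_one_prime P \<longrightarrow> a * D1 P + b * D2 P = val_at P (f1 powi a * f2 powi b)"
  proof (intro allI impI)
    fix P :: "'a set" assume P: "height_one_prime P"
    note d = vat_dv[OF P]
    have "val_at P (f1 powi a * f2 powi b) = val_at P (f1 powi a) + val_at P (f2 powi b)"
      by (rule dv_mult[OF d]) (use f1 f2 in simp_all)
    also have "\<dots> = a * val_at P f1 + b * val_at P f2"
      using dv_powi[OF d f1(1)] dv_powi[OF d f2(1)] by simp
    finally show "a * D1 P + b * D2 P = val_at P (f1 powi a * f2 powi b)" using f1 f2 P by simp
  qed
  then show ?thesis unfolding principal_divisor_def using nz by blast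
qed

lemma torsion_aux:
  fixes S :: "'a set set"
  assumes T: "\<forall>P::'a set. height_one_prime P \<longrightarrow> \<not> prime_class_infinite_order P"
    and S: "finite S"
  shows "\<forall>D::'a set \<Rightarrow> int. (\<forall>P. D P \<noteq> 0 \<longrightarrow> P \<in> S) \<longrightarrow> (\<forall>P\<in>S. height_one_prime P) \<longrightarrow>
           (\<exists>n::int. n \<ge> 1 \<and> principal_divisor (\<lambda>P. n * D P))"
  using S
proof (induction S rule: finite_induct)
  case empty
  show ?case
  proof (intro allI impI)
    fix D :: "'a set \<Rightarrow> int" assume "\<forall>P. D P \<noteq> 0 \<longrightarrow> P \<in> {}"
    then have "(\<lambda>P. 1 * D P) = (\<lambda>P. 0)" by auto
    then show "\<exists>n::int. n \<ge> 1 \<and> principal_divisor (\<lambda>P. n * D P)" using princ_zero by (intro exI[of _ 1]) simp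
  qed
next
  case (insert Q S)
  show ?case
  proof (intro allI impI)
    fix D :: "'a set \<Rightarrow> int"
    assume sup: "\<forall>P. D P \<noteq> 0 \<longrightarrow> P \<in> insert Q S" and h: "\<forall>P\<in>insert Q S. height_one_prime P"
    define D' where "D' = (\<lambda>P. if P = Q then 0 else D P)"
    have "\<forall>P. D' P \<noteq> 0 \<longrightarrow> P \<in> S" using sup by (auto simp: D'_def)
    then obtain n' where n': "n' \<ge> 1" "principal_divisor (\<lambda>P. n' * D' P)" using insert.IH h by blast
    have "height_one_prime Q" using h by simp
    then obtain m where m: "m \<ge> 1" "principal_divisor (\<lambda>P. if P = Q then m else 0)"
      using T unfolding prime_class_infinite_order_def by blast
    have "principal_divisor (\<lambda>P. m * (n' * D' P) + (n' * D Q) * (if P = Q then m else 0))"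
      by (rule princ_lin[OF n'(2) m(2)])
    moreover have "(\<lambda>P. m * (n' * D' P) + (n' * D Q) * (if P = Q then m else 0)) = (\<lambda>P. (n' * m) * D P)"
      by (rule ext) (simp add: D'_def algebra_simps)
    moreover have "(1::int) * 1 \<le> n' * m" by (rule mult_mono) (use n'(1) m(1) in auto)
    ultimately show "\<exists>n::int. n \<ge> 1 \<and> principal_divisor (\<lambda>P. n * D P)" by auto
  qed
qed

lemma exists_inf_prime:
  assumes nt: "\<not> class_group_torsion TYPE('a)"
  shows "\<exists>P::'a set. height_one_prime P \<and> prime_class_infinite_order P"
proof (rule ccontr)
  assume "\<not> ?thesis"
  then have T: "\<forall>P::'a set. height_one_prime P \<longrightarrow> \<not> prime_class_infinite_order P" by blast
  from nt obtain D :: "'a set \<Rightarrow> int" where D: "is_divisor D" "\<forall>n::int. n \<ge> 1 \<longrightarrow> \<not> principal_divisor (\<lambda>P. n * D P)"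
    unfolding class_group_torsion_def by blast
  have "finite {P. D P \<noteq> 0}" "\<forall>P\<in>{P. D P \<noteq> 0}. height_one_prime P" using D(1) by (auto simp: is_divisor_def)
  then show False using torsion_aux[OF T, of "{P. D P \<noteq> 0}"] D(2) by blast
qed

end


context krull_fam
begin

definition supp :: "'a \<Rightarrow> 'a set set" where
  "supp a = {P. height_one_prime P \<and> a \<in> P}"

lemma ht1_prime: "height_one_prime P \<Longrightarrow> r_prime_ideal P"
  by (simp add: height_one_prime_def)

lemma vP_nonneg:
  fixes P :: "'a set"
  assumes P: "height_one_prime P" and a: "a \<noteq> 0"
  shows "0 \<le> val_at P (Fract a 1)"
proof -
  have "Fract a 1 \<in> localization P" using prime_notin_one[OF ht1_prime[OF P]] by (auto simp: localization_def)
  then have "Fract a 1 \<in> valuation_ring (val_at P)" using vat_ring[OF P] by simp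
  then show ?thesis using a by (simp add: valuation_ring_def)
qed

lemma vP_pos_iff:
  fixes P :: "'a set"
  assumes P: "height_one_prime P" and a: "a \<noteq> 0"
  shows "0 < val_at P (Fract a 1) \<longleftrightarrow> a \<in> P"
proof -
  note d = vat_dv[OF P]
  note Pp = ht1_prime[OF P]
  have inv: "val_at P (inverse (Fract a 1)) = - val_at P (Fract a 1)" by (rule dv_inv[OF d]) (use a in simp)
  have inz: "inverse (Fract a 1) \<noteq> 0" using a by (simp del: inverse_fract)
  show ?thesis
  proof
    assume "0 < val_at P (Fract a 1)"
    show "a \<in> P"
    proof (rule ccontr)
      assume "a \<notin> P"
      then have "inverse (Fract a 1) \<in> localization P" by (auto simp: localization_def)
      then have "inverse (Fract a 1) \<in> valuation_ring (val_at P)" using vat_ring[OF P] by simp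
      then have "0 \<le> val_at P (inverse (Fract a 1))" using inz by (simp add: valuation_ring_def del: inverse_fract)
      then show False using inv \<open>0 < val_at P (Fract a 1)\<close> by simp
    qed
  next
    assume aP: "a \<in> P"
    show "0 < val_at P (Fract a 1)"
    proof (rule ccontr)
      assume "\<not> 0 < val_at P (Fract a 1)"
      then have "0 \<le> val_at P (inverse (Fract a 1))" using inv by simp
      then have "inverse (Fract a 1) \<in> valuation_ring (val_at P)" by (simp add: valuation_ring_def del: inverse_fract)
      then have "inverse (Fract a 1) \<in> localization P" using vat_ring[OF P] by simp
      then obtain c d where cd: "inverse (Fract a 1) = Fract c d" "d \<notin> P" by (auto simp: localization_def)
      have d0: "d \<noteq> 0" using cd prime_zero[OF Pp] by auto
      have "Fract 1 a = Fract c d" using cd by simp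
      then have "1 * d = c * a" using eq_fract(1)[OF a d0] by simp
      then have "d \<in> P" using prime_mult[OF Pp aP, of c] by simp
      then show False using cd by simp
    qed
  qed
qed

lemma vP_zero_iff:
  fixes P :: "'a set"
  assumes P: "height_one_prime P" and a: "a \<noteq> 0"
  shows "val_at P (Fract a 1) = 0 \<longleftrightarrow> a \<notin> P"
  using vP_nonneg[OF P a] vP_pos_iff[OF P a] by auto

lemma vP_mult:
  fixes P :: "'a set"
  assumes P: "height_one_prime P" and a: "a \<noteq> 0" and b: "b \<noteq> 0"
  shows "val_at P (Fract (a * b) 1) = val_at P (Fract a 1) + val_at P (Fract b 1)"
  using dv_mult[OF vat_dv[OF P], of "Fract a 1" "Fract b 1"] a b by simp

lemma vP_pow:
  fixes P :: "'a set"
  assumes P: "height_one_prime P" and a: "a \<noteq> 0"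
  shows "val_at P (Fract (a ^ n) 1) = int n * val_at P (Fract a 1)"
  using dv_pow[OF vat_dv[OF P], of "Fract a 1" n] a by (simp add: Fract1_pow)

lemma supp_finite:
  assumes a: "a \<noteq> 0"
  shows "finite (supp a)"
proof -
  have "supp a \<subseteq> center ` {v\<in>V. v (Fract a 1) \<noteq> 0}"
  proof
    fix P assume "P \<in> supp a"
    then have P: "height_one_prime P" and aP: "a \<in> P" by (auto simp: supp_def)
    obtain v where v: "v \<in> V" "center v \<subseteq> P"
      using exists_center[OF ht1_prime[OF P]] P by (auto simp: height_one_prime_def)
    have cv: "center v = P" using ht1_center[OF P v] .
    then have "v (Fract a 1) \<noteq> 0" using aP a by (auto simp: center_def)
    then show "P \<in> center ` {v\<in>V. v (Fract a 1) \<noteq> 0}" using v(1) cv by blast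
  qed
  then show ?thesis using finite_subset finV[OF a] by blast
qed

lemma unit_crit:
  fixes a :: 'a
  assumes a: "a \<noteq> 0" and H: "\<forall>P. height_one_prime P \<longrightarrow> val_at P (Fract a 1) = 0"
  shows "a dvd 1"
proof -
  have inz: "inverse (Fract a 1) \<noteq> 0" using a by (simp del: inverse_fract)
  have "\<forall>P. height_one_prime P \<longrightarrow> 0 \<le> val_at P (inverse (Fract a 1))"
  proof (intro allI impI)
    fix P :: "'a set" assume P: "height_one_prime P"
    have "val_at P (inverse (Fract a 1)) = - val_at P (Fract a 1)" by (rule dv_inv[OF vat_dv[OF P]]) (use a in simp)
    then show "0 \<le> val_at P (inverse (Fract a 1))" using H P by simp
  qed
  then obtain e where e: "inverse (Fract a 1) = Fract e 1" using in_R[OF inz] by blast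
  then have "Fract 1 a = Fract e 1" by simp
  then have "1 * 1 = e * a" using eq_fract(1)[OF a, of 1 1 e] by simp
  then show ?thesis by (metis dvdI mult.commute mult_1)
qed

lemma div_crit:
  fixes a x :: 'a
  assumes a: "a \<noteq> 0" and x: "x \<noteq> 0"
    and H: "\<forall>P. height_one_prime P \<longrightarrow> val_at P (Fract x 1) \<le> val_at P (Fract a 1)"
  shows "\<exists>u. a = u * x"
proof -
  have fz: "Fract a x \<noteq> 0"
  proof
    assume "Fract a x = 0"
    then have "Fract a x = Fract 0 1" by (simp add: fract_collapse)
    then have "a * 1 = 0 * x" using eq_fract(1)[OF x, of 1 a 0] by simp
    then show False using a by simp
  qed
  have "\<forall>P. height_one_prime P \<longrightarrow> 0 \<le> val_at P (Fract a x)"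
  proof (intro allI impI)
    fix P :: "'a set" assume P: "height_one_prime P"
    show "0 \<le> val_at P (Fract a x)" using dv_Fract[OF vat_dv[OF P] a x] H P by simp
  qed
  then obtain u where "Fract a x = Fract u 1" using in_R[OF fz] by blast
  then have "a * 1 = u * x" using eq_fract(1)[OF x, of 1 a u] by simp
  then show ?thesis by auto
qed

lemma assoc_crit:
  fixes a x :: 'a
  assumes a: "a \<noteq> 0" and x: "x \<noteq> 0"
    and H: "\<forall>P. height_one_prime P \<longrightarrow> val_at P (Fract a 1) = val_at P (Fract x 1)"
  shows "\<exists>u. u dvd 1 \<and> a = u * x"
proof -
  have H1: "\<forall>P. height_one_prime P \<longrightarrow> val_at P (Fract x 1) \<le> val_at P (Fract a 1)" using H by simp
  have H2: "\<forall>P. height_one_prime P \<longrightarrow> val_at P (Fract a 1) \<le> val_at P (Fract x 1)" using H by simp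
  obtain u where u: "a = u * x" using div_crit[OF a x H1] by blast
  obtain u' where u': "x = u' * a" using div_crit[OF x a H2] by blast
  have "1 * a = (u * u') * a" using u u' by (simp add: algebra_simps)
  then have "u * u' = 1" using a by (simp only: mult_cancel_right) simp
  then have "u dvd 1" by (metis dvdI)
  then show ?thesis using u by blast
qed

end


lemma frac_le_iff:
  fixes a b a' b' :: int
  assumes b: "0 < b" and b': "0 < b'"
  shows "(of_int a / of_int b \<le> (of_int a' / of_int b' :: int fract)) \<longleftrightarrow> a * b' \<le> a' * b"
proof -
  have pb: "(0::int fract) < of_int b" and pb': "(0::int fract) < of_int b'" using b b' by simp_all
  have "(of_int a / of_int b \<le> (of_int a' / of_int b' :: int fract)) \<longleftrightarrow>
        (of_int a * of_int b' \<le> (of_int a' * of_int b :: int fract))"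
    using pb pb' by (simp add: field_simps)
  also have "\<dots> \<longleftrightarrow> (of_int (a * b') \<le> (of_int (a' * b) :: int fract))" by simp
  also have "\<dots> \<longleftrightarrow> a * b' \<le> a' * b" by (rule of_int_le_iff)
  finally show ?thesis .
qed

context krull_fam
begin

definition Cset :: "'a set" where
  "Cset = {x. x \<noteq> 0 \<and> (\<exists>P. height_one_prime P \<and> prime_class_infinite_order P \<and> x \<in> P)}"

definition deg :: "'a \<Rightarrow> int" where
  "deg a = (\<Sum>P\<in>supp a. val_at P (Fract a 1))"

lemma main_exists:
  assumes Cne: "Cset \<noteq> {}"
  shows "\<exists>P::'a set. height_one_prime P \<and> prime_class_infinite_order P \<and>
           (\<exists>x\<in>P. irreducible x \<and> factors_uniquely (x ^ 2))"
proof -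
  define k0 where "k0 = (LEAST k. \<exists>x\<in>Cset. card (supp x) = k)"
  have ex1: "\<exists>x\<in>Cset. card (supp x) = k0" unfolding k0_def by (rule LeastI_ex) (use Cne in blast)
  define d0 where "d0 = (LEAST d. \<exists>x\<in>Cset. card (supp x) = k0 \<and> nat (deg x) = d)"
  have "\<exists>x\<in>Cset. card (supp x) = k0 \<and> nat (deg x) = d0" unfolding d0_def by (rule LeastI_ex) (use ex1 in blast)
  then obtain x where xC: "x \<in> Cset" and xk: "card (supp x) = k0" and xd: "nat (deg x) = d0" by blast
  have min1: "k0 \<le> card (supp y)" if "y \<in> Cset" for y unfolding k0_def by (rule Least_le) (use that in blast)
  have min2: "d0 \<le> nat (deg y)" if "y \<in> Cset" "card (supp y) = k0" for y
    unfolding d0_def by (rule Least_le) (use that in blast)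
  obtain P0 where P0: "height_one_prime P0" "prime_class_infinite_order P0" "x \<in> P0" and x0: "x \<noteq> 0"
    using xC unfolding Cset_def by blast
  define S where "S = supp x"
  have Sfin: "finite S" using supp_finite[OF x0] by (simp add: S_def)
  have P0S: "P0 \<in> S" using P0 by (simp add: S_def supp_def)
  have Sht: "height_one_prime Q" if "Q \<in> S" for Q using that by (simp add: S_def supp_def)
  define X where "X = (\<lambda>Q. val_at Q (Fract x 1))"
  have Xpos: "0 < X Q" if "Q \<in> S" for Q
    using that vP_pos_iff[OF Sht[OF that] x0] by (simp add: X_def S_def supp_def)
  have Xout: "X Q = 0" if "height_one_prime Q" "Q \<notin> S" for Q
    using that vP_zero_iff[OF that(1) x0] by (simp add: X_def S_def supp_def)
  have xf0: "Fract x 1 \<noteq> 0" using x0 by simp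
  have small: "False" if y0: "y \<noteq> 0" and ysub: "supp y \<subseteq> S - {t}" and tS: "t \<in> S" and yP0: "y \<in> P0" for y t
  proof -
    have "y \<in> Cset" using y0 yP0 P0 unfolding Cset_def by blast
    then have "k0 \<le> card (supp y)" by (rule min1)
    moreover have "card (supp y) \<le> card (S - {t})" using ysub Sfin by (intro card_mono) auto
    moreover have "card (S - {t}) < card S" using card_Diff1_less[OF Sfin tS] .
    ultimately show False using xk by (simp add: S_def)
  qed
  have gprop: "\<forall>i\<in>S. \<forall>j\<in>S. val_at i g * X j = val_at j g * X i"
    if g0: "g \<noteq> 0" and gout: "\<forall>Q. height_one_prime Q \<and> Q \<notin> S \<longrightarrow> val_at Q g = 0" for g
  proof -
    define D where "D = (\<lambda>Q. val_at Q g)"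
    define r where "r = (\<lambda>Q. of_int (D Q) / of_int (X Q) :: int fract)"
    have rle: "r i \<le> r j \<longleftrightarrow> D i * X j \<le> D j * X i" if "i \<in> S" "j \<in> S" for i j
      unfolding r_def by (rule frac_le_iff) (use that Xpos in auto)
    have Sne: "S \<noteq> {}" using P0S by blast
    have fR: "finite (r ` S)" "r ` S \<noteq> {}" using Sfin Sne by auto
    obtain j where j: "j \<in> S" "r j = Min (r ` S)" using Min_in[OF fR] by auto
    obtain k where k: "k \<in> S" "r k = Max (r ` S)" using Max_in[OF fR] by auto
    have rj: "r j \<le> r i" if "i \<in> S" for i using j(2) Min_le[OF fR(1)] that by simp
    have rk: "r i \<le> r k" if "i \<in> S" for i using k(2) Max_ge[OF fR(1)] that by simp
    show ?thesis
    proof (cases "r j = r k")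
      case True
      then have req: "r i = r i'" if "i \<in> S" "i' \<in> S" for i i'
        using rj rk that by (metis order.antisym)
      show ?thesis
      proof (intro ballI)
        fix i i' assume i: "i \<in> S" and i': "i' \<in> S"
        have "D i * X i' \<le> D i' * X i" using rle[OF i i'] req[OF i i'] by simp
        moreover have "D i' * X i \<le> D i * X i'" using rle[OF i' i] req[OF i i'] by simp
        ultimately show "val_at i g * X i' = val_at i' g * X i" unfolding D_def by simp
      qed
    next
      case False
      then have jk: "r j < r k" using rj[OF k(1)] by simp
      have Dout: "D Q = 0" if "height_one_prime Q" "Q \<notin> S" for Q using gout that by (simp add: D_def)
      have build: "\<exists>y. y \<noteq> 0 \<and> (\<forall>Q. height_one_prime Q \<longrightarrow> val_at Q (Fract y 1) = a * D Q + b * X Q)"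
        if nn: "\<forall>Q\<in>S. 0 \<le> a * D Q + b * X Q" for a b
      proof -
        define h where "h = g powi a * Fract x 1 powi b"
        have h0: "h \<noteq> 0" using g0 xf0 by (simp add: h_def)
        have vh: "val_at Q h = a * D Q + b * X Q" if Q: "height_one_prime Q" for Q
        proof -
          note d = vat_dv[OF Q]
          have "val_at Q h = val_at Q (g powi a) + val_at Q (Fract x 1 powi b)"
            unfolding h_def by (rule dv_mult[OF d]) (use g0 xf0 in simp_all)
          then show ?thesis using dv_powi[OF d g0] dv_powi[OF d xf0] by (simp add: D_def X_def)
        qed
        have "\<forall>Q. height_one_prime Q \<longrightarrow> 0 \<le> val_at Q h"
        proof (intro allI impI)
          fix Q :: "'a set" assume Q: "height_one_prime Q"
          show "0 \<le> val_at Q h"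
          proof (cases "Q \<in> S")
            case True then show ?thesis using vh[OF Q] nn by simp
          next
            case False then show ?thesis using vh[OF Q] Dout[OF Q] Xout[OF Q] by simp
          qed
        qed
        then obtain y where y: "h = Fract y 1" using in_R[OF h0] by blast
        then show ?thesis using h0 vh by auto
      qed
      have suppy: "supp y \<subseteq> S - {t}"
        if y0: "y \<noteq> 0" and vy: "\<forall>Q. height_one_prime Q \<longrightarrow> val_at Q (Fract y 1) = a * D Q + b * X Q"
          and t: "a * D t + b * X t = 0" for y a b t
      proof
        fix Q :: "'a set" assume "Q \<in> supp y"
        then have Q: "height_one_prime Q" "y \<in> Q" by (auto simp: supp_def)
        then have pos: "0 < val_at Q (Fract y 1)" using vP_pos_iff[OF Q(1) y0] by simp
        have "Q \<in> S" using pos vy Q Dout[OF Q(1)] Xout[OF Q(1)] by force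
        moreover have "Q \<noteq> t" using pos vy Q t by force
        ultimately show "Q \<in> S - {t}" by simp
      qed
      have Xk: "0 < X k" and Xj: "0 < X j" using Xpos j(1) k(1) by auto
      have nn1: "\<forall>Q\<in>S. 0 \<le> (X k * X j) * D Q + (- (X k * D j)) * X Q"
      proof
        fix Q :: "'a set" assume Q: "Q \<in> S"
        have "D j * X Q \<le> D Q * X j" using rle[OF j(1) Q] rj[OF Q] by simp
        then have "X k * (D j * X Q) \<le> X k * (D Q * X j)" using Xk by simp
        then show "0 \<le> (X k * X j) * D Q + (- (X k * D j)) * X Q" by (simp add: algebra_simps)
      qed
      obtain y1 where y1: "y1 \<noteq> 0" "\<forall>Q. height_one_prime Q \<longrightarrow> val_at Q (Fract y1 1) = (X k * X j) * D Q + (- (X k * D j)) * X Q"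
        using build[OF nn1] by blast
      have s1: "supp y1 \<subseteq> S - {j}" by (rule suppy[OF y1]) (simp add: algebra_simps)
      have nn2: "\<forall>Q\<in>S. 0 \<le> (- (X j * X k)) * D Q + (X j * D k) * X Q"
      proof
        fix Q :: "'a set" assume Q: "Q \<in> S"
        have "D Q * X k \<le> D k * X Q" using rle[OF Q k(1)] rk[OF Q] by simp
        then have "X j * (D Q * X k) \<le> X j * (D k * X Q)" using Xj by simp
        then show "0 \<le> (- (X j * X k)) * D Q + (X j * D k) * X Q" by (simp add: algebra_simps)
      qed
      obtain y2 where y2: "y2 \<noteq> 0" "\<forall>Q. height_one_prime Q \<longrightarrow> val_at Q (Fract y2 1) = (- (X j * X k)) * D Q + (X j * D k) * X Q"
        using build[OF nn2] by blast
      have s2: "supp y2 \<subseteq> S - {k}" by (rule suppy[OF y2]) (simp add: algebra_simps)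
      have "y1 \<in> P0 \<or> y2 \<in> P0"
      proof (rule ccontr)
        assume "\<not> (y1 \<in> P0 \<or> y2 \<in> P0)"
        then have "val_at P0 (Fract y1 1) = 0" "val_at P0 (Fract y2 1) = 0"
          using vP_zero_iff[OF P0(1) y1(1)] vP_zero_iff[OF P0(1) y2(1)] by auto
        then have e1: "X k * (X j * D P0) = X k * (D j * X P0)" and e2: "X j * (D k * X P0) = X j * (X k * D P0)"
          using y1(2) y2(2) P0(1) by (simp_all add: algebra_simps)
        then have "X j * D P0 = D j * X P0" "D k * X P0 = X k * D P0" using Xk Xj by simp_all
        then have "r j = r P0" "r P0 = r k" using rle[OF j(1) P0S] rle[OF P0S j(1)] rle[OF k(1) P0S] rle[OF P0S k(1)]
          by (simp_all add: algebra_simps order.antisym)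
        then show False using jk by simp
      qed
      then show ?thesis using small[OF y1(1) s1 j(1)] small[OF y2(1) s2 k(1)] by blast
    qed
  qed
  have vnn: "0 \<le> val_at Q (Fract a 1)" if "height_one_prime Q" "a \<noteq> 0" for Q :: "'a set" and a :: 'a
    using vP_nonneg[OF that] .
  have deg_nonneg: "0 \<le> deg a" if "a \<noteq> 0" for a :: 'a
    unfolding deg_def using vnn that by (intro sum_nonneg) (auto simp: supp_def)
  define degS where "degS = (\<lambda>a. \<Sum>Q\<in>S. val_at Q (Fract a 1))"
  have degS_nonneg: "0 \<le> degS a" if "a \<noteq> 0" for a :: 'a
    unfolding degS_def using vnn Sht that by (intro sum_nonneg) auto
  have degx: "deg x = degS x" by (simp add: deg_def degS_def S_def)
  have degx_pos: "0 < deg x"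
  proof -
    have "X P0 \<le> (\<Sum>Q\<in>S. X Q)" using Xpos by (intro member_le_sum[OF P0S _ Sfin]) (auto intro: less_imp_le)
    then show ?thesis using Xpos[OF P0S] degx by (simp add: degS_def X_def)
  qed
  have d0x: "int d0 = deg x" using xd deg_nonneg[OF x0] by simp
  have degS_mult: "degS (a * b) = degS a + degS b" if "a \<noteq> 0" "b \<noteq> 0" for a b :: 'a
  proof -
    have "degS (a * b) = (\<Sum>Q\<in>S. val_at Q (Fract a 1) + val_at Q (Fract b 1))"
      unfolding degS_def by (intro sum.cong refl) (rule vP_mult[OF Sht that])
    then show ?thesis by (simp add: sum.distrib degS_def)
  qed
  have sub_of: "\<forall>Q. height_one_prime Q \<and> Q \<notin> S \<longrightarrow> val_at Q (Fract a 1) = 0"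
    if ab: "a * b = x ^ n" for a b :: 'a and n :: nat
  proof (intro allI impI)
    fix Q :: "'a set" assume Q: "height_one_prime Q \<and> Q \<notin> S"
    have xn: "x ^ n \<noteq> 0" using x0 by simp
    then have a0: "a \<noteq> 0" and b0: "b \<noteq> 0" using ab by auto
    have "val_at Q (Fract a 1) + val_at Q (Fract b 1) = val_at Q (Fract (x ^ n) 1)"
      using vP_mult[OF _ a0 b0, of Q] Q ab by simp
    also have "\<dots> = 0" using vP_pow[OF _ x0, of Q n] Q Xout[of Q] by (simp add: X_def)
    finally show "val_at Q (Fract a 1) = 0" using vnn[of Q a] vnn[of Q b] Q a0 b0 by simp
  qed
  have classify: "a dvd 1 \<or> (deg x \<le> degS a \<and> (\<forall>j\<in>S. degS a * X j = val_at j (Fract a 1) * deg x))"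
    if a0: "a \<noteq> 0" and sa: "\<forall>Q. height_one_prime Q \<and> Q \<notin> S \<longrightarrow> val_at Q (Fract a 1) = 0" for a :: 'a
  proof -
    define A where "A = (\<lambda>Q. val_at Q (Fract a 1))"
    have pr: "\<forall>i\<in>S. \<forall>j\<in>S. A i * X j = A j * X i"
      using gprop[of "Fract a 1"] a0 sa by (simp add: A_def)
    show ?thesis
    proof (cases "A P0 = 0")
      case True
      have "\<forall>Q. height_one_prime Q \<longrightarrow> val_at Q (Fract a 1) = 0"
      proof (intro allI impI)
        fix Q :: "'a set" assume Q: "height_one_prime Q"
        show "val_at Q (Fract a 1) = 0"
        proof (cases "Q \<in> S")
          case True
          then have "A Q * X P0 = 0" using pr P0S \<open>A P0 = 0\<close> by force
          then show ?thesis using Xpos[OF P0S] by (simp add: A_def)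
        next
          case False then show ?thesis using sa Q by blast
        qed
      qed
      then show ?thesis using unit_crit[OF a0] by blast
    next
      case False
      then have AP0: "0 < A P0" using vnn[OF P0(1) a0] by (simp add: A_def)
      have Apos: "0 < A Q" if "Q \<in> S" for Q
      proof -
        have "A Q * X P0 = A P0 * X Q" using pr that P0S by blast
        moreover have "0 < A P0 * X Q" using AP0 Xpos[OF that] by simp
        ultimately have "0 < A Q * X P0" by simp
        then show ?thesis using Xpos[OF P0S] by (simp add: zero_less_mult_iff)
      qed
      have suppa: "supp a = S"
      proof
        show "supp a \<subseteq> S"
        proof
          fix Q :: "'a set" assume "Q \<in> supp a"
          then have Q: "height_one_prime Q" "a \<in> Q" by (auto simp: supp_def)
          then have "0 < val_at Q (Fract a 1)" using vP_pos_iff[OF Q(1) a0] by simp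
          then show "Q \<in> S" using sa Q by force
        qed
        show "S \<subseteq> supp a"
        proof
          fix Q :: "'a set" assume Q: "Q \<in> S"
          then have "a \<in> Q" using Apos[OF Q] vP_pos_iff[OF Sht[OF Q] a0] by (simp add: A_def)
          then show "Q \<in> supp a" using Sht[OF Q] by (simp add: supp_def)
        qed
      qed
      have "a \<in> Cset" using suppa P0S P0 a0 unfolding Cset_def supp_def by blast
      moreover have "card (supp a) = k0" using suppa xk by (simp add: S_def)
      ultimately have "d0 \<le> nat (deg a)" by (rule min2)
      moreover have "deg a = degS a" using suppa by (simp add: deg_def degS_def)
      ultimately have le: "deg x \<le> degS a" using d0x deg_nonneg[OF a0] by simp
      have "\<forall>j\<in>S. degS a * X j = A j * deg x"
      proof
        fix j assume j: "j \<in> S"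
        have "degS a * X j = (\<Sum>i\<in>S. A i * X j)" by (simp add: degS_def A_def sum_distrib_right)
        also have "\<dots> = (\<Sum>i\<in>S. A j * X i)" using pr j by (intro sum.cong) auto
        also have "\<dots> = A j * deg x" by (simp add: degx degS_def X_def sum_distrib_left)
        finally show "degS a * X j = A j * deg x" .
      qed
      then show ?thesis using le by (simp add: A_def)
    qed
  qed
  have xnu: "\<not> x dvd 1" using unit_notin_prime[OF ht1_prime[OF P0(1)]] P0(3) by blast
  have irr: "irreducible x"
    unfolding irreducible_def
  proof (intro conjI allI impI)
    show "x \<noteq> 0" by (rule x0)
    show "\<not> x dvd 1" by (rule xnu)
    fix a b assume xab: "x = a * b"
    have a0: "a \<noteq> 0" and b0: "b \<noteq> 0" using xab x0 by auto
    have "a * b = x ^ 1" using xab by simp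
    then have sa: "\<forall>Q. height_one_prime Q \<and> Q \<notin> S \<longrightarrow> val_at Q (Fract a 1) = 0" by (rule sub_of)
    have "b * a = x ^ 1" using xab by (simp add: mult.commute)
    then have sb: "\<forall>Q. height_one_prime Q \<and> Q \<notin> S \<longrightarrow> val_at Q (Fract b 1) = 0" by (rule sub_of)
    show "a dvd 1 \<or> b dvd 1"
    proof (rule ccontr)
      assume nu: "\<not> (a dvd 1 \<or> b dvd 1)"
      then have "deg x \<le> degS a" "deg x \<le> degS b" using classify[OF a0 sa] classify[OF b0 sb] by auto
      moreover have "degS x = degS a + degS b" using xab degS_mult[OF a0 b0] by simp
      ultimately show False using degx degx_pos by simp
    qed
  qed
  have sq_ne: "x ^ 2 \<noteq> 0" using x0 by simp
  have degS_sq: "degS (x ^ 2) = 2 * deg x"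
  proof -
    have "degS (x ^ 2) = (\<Sum>Q\<in>S. 2 * val_at Q (Fract x 1))"
      unfolding degS_def by (intro sum.cong refl) (simp add: vP_pow[OF Sht x0])
    then show ?thesis by (simp add: degS_def degx sum_distrib_left)
  qed
  have degS_prod: "degS (prod_list xs) = sum_list (map degS xs)" if "0 \<notin> set xs" for xs :: "'a list"
    using that
  proof (induction xs)
    case Nil
    have "\<forall>Q\<in>S. val_at Q 1 = 0" using dv_one[OF vat_dv[OF Sht]] by blast
    then show ?case unfolding degS_def by (simp add: sum.neutral)
  next
    case (Cons a xs)
    then have a0: "a \<noteq> 0" and p0: "prod_list xs \<noteq> 0" by (auto simp: prod_list_zero_iff)
    then show ?case using Cons degS_mult[OF a0 p0] by simp
  qed
  have elem: "deg x \<le> degS a \<and> (degS a = deg x \<longrightarrow> (\<exists>u. u dvd 1 \<and> a = u * x))"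
    if ia: "irreducible a" and ad: "a dvd x ^ 2" for a :: 'a
  proof -
    obtain b where ab: "x ^ 2 = a * b" using ad by (auto elim: dvdE)
    have a0: "a \<noteq> 0" using ia by (simp add: irreducible_def)
    have sa: "\<forall>Q. height_one_prime Q \<and> Q \<notin> S \<longrightarrow> val_at Q (Fract a 1) = 0" using sub_of[of a b 2] ab by simp
    have nu: "\<not> a dvd 1" using ia by (simp add: irreducible_def)
    then have c: "deg x \<le> degS a" "\<forall>j\<in>S. degS a * X j = val_at j (Fract a 1) * deg x"
      using classify[OF a0 sa] by auto
    have "\<exists>u. u dvd 1 \<and> a = u * x" if eq: "degS a = deg x"
    proof -
      have "\<forall>Q. height_one_prime Q \<longrightarrow> val_at Q (Fract a 1) = val_at Q (Fract x 1)"
      proof (intro allI impI)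
        fix Q :: "'a set" assume Q: "height_one_prime Q"
        show "val_at Q (Fract a 1) = val_at Q (Fract x 1)"
        proof (cases "Q \<in> S")
          case True
          then have "degS a * X Q = val_at Q (Fract a 1) * deg x" using c(2) by blast
          then have "deg x * X Q = deg x * val_at Q (Fract a 1)" using eq by (simp add: mult.commute)
          then show ?thesis using degx_pos by (simp add: X_def mult.commute)
        next
          case False then show ?thesis using sa Q Xout[OF Q] by (simp add: X_def)
        qed
      qed
      then show ?thesis using assoc_crit[OF a0 x0] by blast
    qed
    then show ?thesis using c(1) by blast
  qed
  have listL: "\<exists>u1 u2. u1 dvd 1 \<and> u2 dvd 1 \<and> xs = [u1 * x, u2 * x]"
    if irr_xs: "\<forall>a\<in>set xs. irreducible a" and pxs: "prod_list xs = x ^ 2" for xs :: "'a list"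
  proof -
    have nz: "0 \<notin> set xs" using irr_xs by (auto simp: irreducible_def)
    have e: "deg x \<le> degS a \<and> (degS a = deg x \<longrightarrow> (\<exists>u. u dvd 1 \<and> a = u * x))" if "a \<in> set xs" for a
      using elem[of a] irr_xs that prod_list_dvd[OF that] pxs by simp
    have sumeq: "sum_list (map degS xs) = 2 * deg x" using degS_prod[OF nz] pxs degS_sq by simp
    show ?thesis
    proof (cases xs)
      case Nil
      then have "x ^ 2 = 1" using pxs by simp
      then have "x dvd 1" by (metis dvdI power2_eq_square)
      then show ?thesis using xnu by blast
    next
      case (Cons a rest)
      note xs = Cons
      show ?thesis
      proof (cases rest)
        case Nil
        then have "a = x * x" using pxs xs by (simp add: power2_eq_square)
        moreover have "irreducible a" using irr_xs xs by simp
        ultimately show ?thesis using xnu unfolding irreducible_def by blast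
      next
        case (Cons b rest2)
        note r = Cons
        have ea: "deg x \<le> degS a" and eb: "deg x \<le> degS b" using e xs r by auto
        show ?thesis
        proof (cases rest2)
          case Nil
          then have "degS a + degS b = 2 * deg x" using sumeq xs r by simp
          then have "degS a = deg x" "degS b = deg x" using ea eb by auto
          then obtain u1 u2 where "u1 dvd 1" "a = u1 * x" "u2 dvd 1" "b = u2 * x"
            using e[of a] e[of b] xs r by auto
          then show ?thesis using xs r Nil by blast
        next
          case (Cons c rest3)
          have ec: "deg x \<le> degS c" using e xs r Cons by auto
          have "0 \<le> sum_list (map degS rest3)"
          proof (intro sum_list_nonneg)
            fix y assume "y \<in> set (map degS rest3)"
            then obtain z where z: "z \<in> set rest3" "y = degS z" by auto
            then have "z \<noteq> 0" using nz xs r Cons by auto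
            then show "0 \<le> y" using degS_nonneg z(2) by simp
          qed
          then have "3 * deg x \<le> sum_list (map degS xs)" using ea eb ec xs r Cons by simp
          then show ?thesis using sumeq degx_pos by simp
        qed
      qed
    qed
  qed
  have fu: "factors_uniquely (x ^ 2)"
    unfolding factors_uniquely_def
  proof (intro conjI allI impI)
    show "x ^ 2 \<noteq> 0" by (rule sq_ne)
    show "\<not> x ^ 2 dvd 1"
    proof
      assume "x ^ 2 dvd 1"
      moreover have "x dvd x ^ 2" by (simp add: power2_eq_square)
      ultimately have "x dvd 1" using dvd_trans by blast
      then show False using xnu by blast
    qed
    fix xs ys :: "'a list"
    assume ixs: "\<forall>a\<in>set xs. irreducible a" and iys: "\<forall>b\<in>set ys. irreducible b"
      and px: "prod_list xs = x ^ 2" and py: "prod_list ys = x ^ 2"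
    obtain u1 u2 where u: "u1 dvd 1" "u2 dvd 1" "xs = [u1 * x, u2 * x]" using listL[OF ixs px] by blast
    obtain w1 w2 where w: "w1 dvd 1" "w2 dvd 1" "ys = [w1 * x, w2 * x]" using listL[OF iys py] by blast
    obtain w1' where w1': "1 = w1 * w1'" using w(1) by (auto elim: dvdE)
    obtain w2' where w2': "1 = w2 * w2'" using w(2) by (auto elim: dvdE)
    have w1u: "w1' dvd 1" using w1' by (metis dvdI mult.commute)
    have w2u: "w2' dvd 1" using w2' by (metis dvdI mult.commute)
    have "u1 * w1' dvd 1" using mult_dvd_mono[OF u(1) w1u] by simp
    moreover have "u1 * x = (u1 * w1') * (w1 * x)"
    proof -
      have "(u1 * w1') * (w1 * x) = u1 * (w1 * w1') * x" by (simp add: algebra_simps)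
      also have "\<dots> = u1 * x" using w1' by simp
      finally show ?thesis by simp
    qed
    moreover have "u2 * w2' dvd 1" using mult_dvd_mono[OF u(2) w2u] by simp
    moreover have "u2 * x = (u2 * w2') * (w2 * x)"
    proof -
      have "(u2 * w2') * (w2 * x) = u2 * (w2 * w2') * x" by (simp add: algebra_simps)
      also have "\<dots> = u2 * x" using w2' by simp
      finally show ?thesis by simp
    qed
    ultimately have "list_all2 (\<lambda>a b. \<exists>u. u dvd 1 \<and> a = u * b) xs ys" using u(3) w(3) by auto
    then show "\<exists>zs. mset zs = mset ys \<and> list_all2 (\<lambda>a b. \<exists>u. u dvd 1 \<and> a = u * b) xs zs" by blast
  qed
  show ?thesis using P0 irr fu by blast
qed

end


theorem mainTheorem4:
  assumes "krull_domain TYPE('a::idom)"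
    and "\<not> class_group_torsion TYPE('a)"
  shows "\<exists>P :: 'a set. height_one_prime P \<and> prime_class_infinite_order P \<and>
           (\<exists>x\<in>P. irreducible x \<and> factors_uniquely (x ^ 2))"
proof -
  obtain V :: "('a fract \<Rightarrow> int) set" where V:
    "\<forall>v\<in>V. discrete_valuation v"
    "\<forall>x :: 'a fract. (\<exists>a. x = Fract a 1) \<longleftrightarrow> (\<forall>v\<in>V. x \<in> valuation_ring v)"
    "\<forall>a :: 'a. a \<noteq> 0 \<longrightarrow> finite {v\<in>V. v (Fract a 1) \<noteq> 0}"
    using assms(1) unfolding krull_domain_def by blast
  interpret K: krull_fam V
    by (unfold_locales) (use V in blast)+
  obtain P :: "'a set" where P: "height_one_prime P" "prime_class_infinite_order P"
    using K.exists_inf_prime[OF assms(2)] by blast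
  obtain c where c: "c \<in> P" "c \<noteq> 0"
    using P(1) prime_zero[OF K.ht1_prime[OF P(1)]] unfolding height_one_prime_def by blast
  have "K.Cset \<noteq> {}" using P c unfolding K.Cset_def by blast
  then show ?thesis by (rule K.main_exists)
qed

end
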